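(* In the general setting described in the context, let $\mathcal X=\{x_{n,k}\}$ be a Marcinkiewicz–Zygmund family for $M$ with weights $\tau_{n,k}$, constants $A,B$, and condition number $\kappa=B/A$. Let $\sigma>\sigma_{\mathrm{crit}}$, $f\in H^\sigma(M)$, and for $n\in\mathbb N$ let $p_n=\operatorname{argmin}_{p\in\mathcal P_n}\sum_{k=1}^{L_n}|f(x_{n,k})-p(x_{n,k})|^2\tau_{n,k}$. Then $$\|f-p_n\|_2\le\sqrt{1+\kappa^2}\,\|f\|_{H^\sigma}\,\phi_\sigma(n).$$
   Context: $M$ is a compact space, $\mu$ a probability measure on $M$, $\langle f,g\rangle=\int_Mf\bar g\,d\mu$, $\|\cdot\|_2$ the $L^2(M,\mu)$-norm. $\{\phi_k:k\in\mathbb N\}$ is an orthonormal basis of $L^2(M,\mu)$ of continuous functions with $\phi_1\equiv1$; $\hat f(k)=\langle f,\phi_k\rangle$. $(\lambda_k)$ is non-decreasing, $\lambda_k\ge0$, $\lambda_k\to\infty$. $H^\sigma(M)=\{f:\|f\|_{H^\sigma}^2=\sum_k|\hat f(k)|^2(1+\lambda_k^2)^\sigma<\infty\}$. $\mathcal P_n=\operatorname{span}\{\phi_k:\lambda_k\le n\}$. There is $\sigma_{\mathrm{crit}}$ such that $C_\sigma^2=\sup_{x\in M}\sum_k|\phi_k(x)|^2(1+\lambda_k^2)^{-\sigma}<\infty$ for all $\sigma>\sigma_{\mathrm{crit}}$ (so $H^\sigma(M)\subseteq C(M)$ for such $\sigma$). $\phi_\sigma(n)=\sup_{x\in M}\big(\sum_{k:\lambda_k>n}|\phi_k(x)|^2(1+\lambda_k^2)^{-\sigma}\big)^{1/2}$.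 A Marcinkiewicz–Zygmund family is $\{x_{n,k}:n\in\mathbb N,k=1,\dots,L_n\}\subseteq M$ with weights $\tau_{n,k}>0$ and constants $A,B>0$ independent of $n$ such that $A\|p\|_2^2\le\sum_{k=1}^{L_n}|p(x_{n,k})|^2\tau_{n,k}\le B\|p\|_2^2$ for all $p\in\mathcal P_n$. *)

theory Defs
  imports "HOL-Probability.Probability"
begin

text \<open>Functions are complex valued on the carrier M = space mu.\<close>

definition l2inner :: "'a measure \<Rightarrow> ('a \<Rightarrow> complex) \<Rightarrow> ('a \<Rightarrow> complex) \<Rightarrow> complex" where
  "l2inner mu f g = (LINT x|mu. f x * cnj (g x))"

definition l2norm :: "'a measure \<Rightarrow> ('a \<Rightarrow> complex) \<Rightarrow> real" where
  "l2norm mu f = sqrt (LINT x|mu. (cmod (f x))\<^sup>2)"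

definition in_L2 :: "'a measure \<Rightarrow> ('a \<Rightarrow> complex) \<Rightarrow> bool" where
  "in_L2 mu f \<longleftrightarrow> f \<in> borel_measurable mu \<and> integrable mu (\<lambda>x. (cmod (f x))\<^sup>2)"

definition is_ONB :: "'a measure \<Rightarrow> (nat \<Rightarrow> 'a \<Rightarrow> complex) \<Rightarrow> bool" where
  "is_ONB mu phi \<longleftrightarrow>
     (\<forall>k. in_L2 mu (phi k)) \<and>
     (\<forall>j k. l2inner mu (phi j) (phi k) = (if j = k then 1 else 0)) \<and>
     (\<forall>g. in_L2 mu g \<and> (\<forall>k. l2inner mu g (phi k) = 0) \<longrightarrow> (AE x in mu. g x = 0))"

definition fcoef :: "'a measure \<Rightarrow> (nat \<Rightarrow> 'a \<Rightarrow> complex) \<Rightarrow> ('a \<Rightarrow> complex) \<Rightarrow> nat \<Rightarrow> complex" where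
  "fcoef mu phi f k = l2inner mu f (phi k)"

definition hs_norm :: "'a measure \<Rightarrow> (nat \<Rightarrow> 'a \<Rightarrow> complex) \<Rightarrow> (nat \<Rightarrow> real) \<Rightarrow> real \<Rightarrow> ('a \<Rightarrow> complex) \<Rightarrow> real" where
  "hs_norm mu phi lam s f =
     sqrt (\<Sum>k. (cmod (fcoef mu phi f k))\<^sup>2 * (1 + (lam k)\<^sup>2) powr s)"

definition in_Hs :: "'a measure \<Rightarrow> (nat \<Rightarrow> 'a \<Rightarrow> complex) \<Rightarrow> (nat \<Rightarrow> real) \<Rightarrow> real \<Rightarrow> ('a \<Rightarrow> complex) \<Rightarrow> bool" where
  "in_Hs mu phi lam s f \<longleftrightarrow>
     in_L2 mu f \<and> summable (\<lambda>k. (cmod (fcoef mu phi f k))\<^sup>2 * (1 + (lam k)\<^sup>2) powr s)"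

definition Pn :: "(nat \<Rightarrow> 'a \<Rightarrow> complex) \<Rightarrow> (nat \<Rightarrow> real) \<Rightarrow> nat \<Rightarrow> ('a \<Rightarrow> complex) set" where
  "Pn phi lam n = {(\<lambda>x. \<Sum>k\<in>{k. lam k \<le> real n}. c k * phi k x) | c :: nat \<Rightarrow> complex. True}"

definition Csigma_finite :: "'a measure \<Rightarrow> (nat \<Rightarrow> 'a \<Rightarrow> complex) \<Rightarrow> (nat \<Rightarrow> real) \<Rightarrow> real \<Rightarrow> bool" where
  "Csigma_finite mu phi lam s \<longleftrightarrow>
     (\<exists>C. \<forall>x\<in>space mu. summable (\<lambda>k. (cmod (phi k x))\<^sup>2 * (1 + (lam k)\<^sup>2) powr (- s)) \<and>
                        (\<Sum>k. (cmod (phi k x))\<^sup>2 * (1 + (lam k)\<^sup>2) powr (- s)) \<le> C)"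

definition phi_sigma :: "'a measure \<Rightarrow> (nat \<Rightarrow> 'a \<Rightarrow> complex) \<Rightarrow> (nat \<Rightarrow> real) \<Rightarrow> real \<Rightarrow> nat \<Rightarrow> real" where
  "phi_sigma mu phi lam s n =
     (SUP x\<in>space mu. sqrt (\<Sum>k. if lam k > real n then (cmod (phi k x))\<^sup>2 * (1 + (lam k)\<^sup>2) powr (- s) else 0))"

definition MZ_family :: "'a measure \<Rightarrow> (nat \<Rightarrow> 'a \<Rightarrow> complex) \<Rightarrow> (nat \<Rightarrow> real) \<Rightarrow>
    (nat \<Rightarrow> nat \<Rightarrow> 'a) \<Rightarrow> (nat \<Rightarrow> nat \<Rightarrow> real) \<Rightarrow> (nat \<Rightarrow> nat) \<Rightarrow> real \<Rightarrow> real \<Rightarrow> bool" where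
  "MZ_family mu phi lam X tau L A B \<longleftrightarrow>
     A > 0 \<and> B > 0 \<and>
     (\<forall>n. \<forall>k\<in>{1..L n}. X n k \<in> space mu \<and> tau n k > 0) \<and>
     (\<forall>n. \<forall>p\<in>Pn phi lam n.
        A * (l2norm mu p)\<^sup>2 \<le> (\<Sum>k=1..L n. (cmod (p (X n k)))\<^sup>2 * tau n k) \<and>
        (\<Sum>k=1..L n. (cmod (p (X n k)))\<^sup>2 * tau n k) \<le> B * (l2norm mu p)\<^sup>2)"

definition ls_error :: "(nat \<Rightarrow> nat \<Rightarrow> 'a) \<Rightarrow> (nat \<Rightarrow> nat \<Rightarrow> real) \<Rightarrow> (nat \<Rightarrow> nat) \<Rightarrow> nat \<Rightarrow>
    ('a \<Rightarrow> complex) \<Rightarrow> ('a \<Rightarrow> complex) \<Rightarrow> real" where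
  "ls_error X tau L n f p = (\<Sum>k=1..L n. (cmod (f (X n k) - p (X n k)))\<^sup>2 * tau n k)"

end

theory Submission
  imports Defs
begin

lemma cmod_diff_sq: "(cmod (u - complex_of_real t * w))\<^sup>2 = (cmod u)\<^sup>2 - 2 * t * Re (u * cnj w) + t\<^sup>2 * (cmod w)\<^sup>2"
  by (simp only: cmod_power2) (simp add: power2_eq_square algebra_simps)

lemma cmod_add_sq: "(cmod (u + w))\<^sup>2 = (cmod u)\<^sup>2 + 2 * Re (u * cnj w) + (cmod w)\<^sup>2"
  by (simp only: cmod_power2) (simp add: power2_eq_square algebra_simps)

lemma discrete_ls:
  fixes u w :: "nat \<Rightarrow> complex" and tau :: "nat \<Rightarrow> real"
  assumes tau: "\<And>k. k \<in> K \<Longrightarrow> tau k > 0"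
    and mn: "\<And>t. 0 < t \<Longrightarrow> t \<le> 1 \<Longrightarrow> (\<Sum>k\<in>K. (cmod (u k))\<^sup>2 * tau k) \<le> (\<Sum>k\<in>K. (cmod (u k - complex_of_real t * w k))\<^sup>2 * tau k)"
  shows "(\<Sum>k\<in>K. (cmod (w k))\<^sup>2 * tau k) \<le> (\<Sum>k\<in>K. (cmod (u k - w k))\<^sup>2 * tau k)"
proof -
  define U where "U = (\<Sum>k\<in>K. (cmod (u k))\<^sup>2 * tau k)"
  define R where "R = (\<Sum>k\<in>K. Re (u k * cnj (w k)) * tau k)"
  define W where "W = (\<Sum>k\<in>K. (cmod (w k))\<^sup>2 * tau k)"
  have expand: "(\<Sum>k\<in>K. (cmod (u k - complex_of_real t * w k))\<^sup>2 * tau k) = U - 2 * t * R + t\<^sup>2 * W" for t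
    unfolding U_def R_def W_def cmod_diff_sq
    by (simp add: sum_distrib_left sum_subtractf sum.distrib algebra_simps)
  have U0: "U \<ge> 0" unfolding U_def using tau by (intro sum_nonneg mult_nonneg_nonneg) (auto intro: less_imp_le)
  have W0: "W \<ge> 0" unfolding W_def using tau by (intro sum_nonneg mult_nonneg_nonneg) (auto intro: less_imp_le)
  have key: "2 * R \<le> t * W" if "0 < t" "t \<le> 1" for t
  proof -
    have "U \<le> U - 2 * t * R + t\<^sup>2 * W" using mn[OF that] expand[of t] unfolding U_def by simp
    hence "t * (2 * R) \<le> t * (t * W)" by (simp add: power2_eq_square algebra_simps)
    thus ?thesis using that by simp
  qed
  have R0: "R \<le> 0"
  proof (rule ccontr)
    assume "\<not> R \<le> 0"
    hence Rp: "R > 0" by simp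
    define t where "t = min 1 (R / (W + 1))"
    have t0: "t > 0" "t \<le> 1" unfolding t_def using Rp W0 by auto
    have "t * W \<le> R / (W + 1) * W" unfolding t_def using W0 by (intro mult_right_mono) auto
    also have "\<dots> < R" using Rp W0 by (simp add: field_simps)
    finally show False using key[OF t0] Rp by simp
  qed
  have "(\<Sum>k\<in>K. (cmod (u k - w k))\<^sup>2 * tau k) = U - 2 * R + W"
    using expand[of 1] by simp
  thus ?thesis using U0 R0 W_def by simp
qed

lemma L2_prod_integrable:
  assumes "in_L2 mu h1" "in_L2 mu h2"
  shows "integrable mu (\<lambda>x. h1 x * cnj (h2 x))"
proof (rule Bochner_Integration.integrable_bound)
  show "integrable mu (\<lambda>x. (cmod (h1 x))\<^sup>2 + (cmod (h2 x))\<^sup>2)"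
    using assms unfolding in_L2_def by auto
  have "(\<lambda>x. cnj (h2 x)) \<in> borel_measurable mu"
    using assms unfolding in_L2_def
    by (intro borel_measurable_continuous_on[where f=cnj]) (auto intro: continuous_intros)
  thus "(\<lambda>x. h1 x * cnj (h2 x)) \<in> borel_measurable mu"
    using assms unfolding in_L2_def by auto
  show "AE x in mu. norm (h1 x * cnj (h2 x)) \<le> norm ((cmod (h1 x))\<^sup>2 + (cmod (h2 x))\<^sup>2)"
  proof (intro AE_I2)
    fix x
    have "cmod (h1 x) * cmod (h2 x) \<le> (cmod (h1 x))\<^sup>2 + (cmod (h2 x))\<^sup>2"
      by (smt (verit) norm_ge_zero power2_eq_square mult_mono mult_nonneg_nonneg sum_squares_bound)
    thus "norm (h1 x * cnj (h2 x)) \<le> norm ((cmod (h1 x))\<^sup>2 + (cmod (h2 x))\<^sup>2)"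
      by (simp add: norm_mult)
  qed
qed

lemma L2_add:
  assumes "in_L2 mu h1" "in_L2 mu h2"
  shows "in_L2 mu (\<lambda>x. h1 x + h2 x)"
  unfolding in_L2_def
proof
  show "(\<lambda>x. h1 x + h2 x) \<in> borel_measurable mu" using assms unfolding in_L2_def by auto
  have "integrable mu (\<lambda>x. (cmod (h1 x))\<^sup>2 + 2 * Re (h1 x * cnj (h2 x)) + (cmod (h2 x))\<^sup>2)"
  proof -
    have "integrable mu (\<lambda>x. Re (h1 x * cnj (h2 x)))"
      using integrable_Re[OF L2_prod_integrable[OF assms]] by (simp only:)
    hence "integrable mu (\<lambda>x. 2 * Re (h1 x * cnj (h2 x)))" by (rule integrable_mult_right)
    thus ?thesis using assms unfolding in_L2_def by (intro Bochner_Integration.integrable_add) blast+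
  qed
  thus "integrable mu (\<lambda>x. (cmod (h1 x + h2 x))\<^sup>2)" by (simp add: cmod_add_sq)
qed

lemma L2_scale:
  assumes "in_L2 mu h"
  shows "in_L2 mu (\<lambda>x. c * h x)"
  using assms unfolding in_L2_def by (auto simp: norm_mult power_mult_distrib)

lemma L2_diff:
  assumes "in_L2 mu h1" "in_L2 mu h2"
  shows "in_L2 mu (\<lambda>x. h1 x - h2 x)"
  using L2_add[OF assms(1) L2_scale[OF assms(2), of "-1"]] by simp

lemma L2_sum:
  assumes "\<And>k. k \<in> I \<Longrightarrow> in_L2 mu (F k)"
  shows "in_L2 mu (\<lambda>x. \<Sum>k\<in>I. F k x)"
  using assms
proof (induction I rule: infinite_finite_induct)
  case (infinite A) thus ?case by (simp add: in_L2_def)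
next
  case empty thus ?case by (simp add: in_L2_def)
next
  case (insert a A)
  thus ?case using L2_add[of mu "F a" "\<lambda>x. \<Sum>k\<in>A. F k x"] by simp
qed

lemma pointwise_bound:
  fixes c ph :: "nat \<Rightarrow> complex" and rho :: "nat \<Rightarrow> real" and r :: "nat \<Rightarrow> bool"
  assumes rho: "\<And>k. rho k > 0"
    and s1: "summable (\<lambda>k. (cmod (c k))\<^sup>2 * rho k powr sg)"
    and s2: "summable (\<lambda>k. if r k then (cmod (ph k))\<^sup>2 * rho k powr (- sg) else 0)"
    and G: "(\<lambda>k. if r k then c k * ph k else 0) sums G"
  shows "cmod G \<le> sqrt (\<Sum>k. (cmod (c k))\<^sup>2 * rho k powr sg) *
                   sqrt (\<Sum>k. if r k then (cmod (ph k))\<^sup>2 * rho k powr (- sg) else 0)"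
proof -
  define u where "u k = cmod (c k) * rho k powr (sg / 2)" for k
  define v where "v k = (if r k then cmod (ph k) else 0) * rho k powr (- sg / 2)" for k
  have u2: "(u k)\<^sup>2 = (cmod (c k))\<^sup>2 * rho k powr sg" for k
  proof -
    have "rho k powr (sg / 2) * rho k powr (sg / 2) = rho k powr sg"
      by (simp add: powr_add[symmetric])
    thus ?thesis unfolding u_def by (simp add: power2_eq_square algebra_simps)
  qed
  have v2: "(v k)\<^sup>2 = (if r k then (cmod (ph k))\<^sup>2 * rho k powr (- sg) else 0)" for k
  proof -
    have "rho k powr (- sg / 2) * rho k powr (- sg / 2) = rho k powr (- sg)"
      by (simp add: powr_add[symmetric])
    thus ?thesis unfolding v_def by (simp add: power2_eq_square algebra_simps)
  qed
  have uv: "\<bar>u k\<bar> * \<bar>v k\<bar> = cmod (if r k then c k * ph k else 0)" for k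
  proof -
    have "rho k powr (sg / 2) * rho k powr (- sg / 2) = 1"
      using rho[of k] by (simp add: powr_add[symmetric])
    hence "u k * v k = cmod (if r k then c k * ph k else 0)"
      unfolding u_def v_def by (auto simp: norm_mult algebra_simps)
    moreover have "u k \<ge> 0" "v k \<ge> 0" unfolding u_def v_def by auto
    ultimately show ?thesis by simp
  qed
  define S1 where "S1 = (\<Sum>k. (cmod (c k))\<^sup>2 * rho k powr sg)"
  define S2 where "S2 = (\<Sum>k. if r k then (cmod (ph k))\<^sup>2 * rho k powr (- sg) else 0)"
  have bound: "cmod (\<Sum>k<N. if r k then c k * ph k else 0) \<le> sqrt S1 * sqrt S2" for N
  proof -
    have "cmod (\<Sum>k<N. if r k then c k * ph k else 0) \<le> (\<Sum>k<N. cmod (if r k then c k * ph k else 0))"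
      by (rule norm_sum)
    also have "\<dots> = (\<Sum>k<N. \<bar>u k\<bar> * \<bar>v k\<bar>)" using uv by simp
    also have "\<dots> \<le> L2_set u {..<N} * L2_set v {..<N}" by (rule L2_set_mult_ineq)
    also have "\<dots> \<le> sqrt S1 * sqrt S2"
    proof (intro mult_mono)
      show "L2_set u {..<N} \<le> sqrt S1" unfolding L2_set_def S1_def u2
        by (intro real_sqrt_le_mono sum_le_suminf s1) auto
      show "L2_set v {..<N} \<le> sqrt S2" unfolding L2_set_def S2_def v2
        by (intro real_sqrt_le_mono sum_le_suminf s2) auto
      show "0 \<le> sqrt S1" unfolding S1_def by (intro real_sqrt_ge_zero suminf_nonneg s1) auto
    qed auto
    finally show ?thesis .
  qed
  have "(\<lambda>N. cmod (\<Sum>k<N. if r k then c k * ph k else 0)) \<longlonglongrightarrow> cmod G"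
    using G unfolding sums_def by (intro tendsto_norm)
  thus ?thesis unfolding S1_def[symmetric] S2_def[symmetric]
    by (rule LIMSEQ_le_const2) (use bound in auto)
qed

theorem theorem3p3:
  fixes mu :: "'a::topological_space measure"
    and phi :: "nat \<Rightarrow> 'a \<Rightarrow> complex"
    and lam :: "nat \<Rightarrow> real"
    and sigma_crit sigma A B :: real
    and X :: "nat \<Rightarrow> nat \<Rightarrow> 'a" and tau :: "nat \<Rightarrow> nat \<Rightarrow> real" and L :: "nat \<Rightarrow> nat"
    and f p :: "'a \<Rightarrow> complex" and n :: nat
  assumes prob: "prob_space mu"
    and cpt: "compact (space mu)"
    and borel_sets: "sets mu = sets (restrict_space borel (space mu))"
    and phi_cont: "\<forall>k. continuous_on (space mu) (phi k)"
    and onb: "is_ONB mu phi"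
    and phi0: "\<forall>x\<in>space mu. phi 0 x = 1"
    and lam_mono: "mono lam"
    and lam_nonneg: "\<forall>k. lam k \<ge> 0"
    and lam_lim: "filterlim lam at_top sequentially"
    and crit: "\<forall>s>sigma_crit. Csigma_finite mu phi lam s"
    and sigma: "sigma > sigma_crit"
    and MZ: "MZ_family mu phi lam X tau L A B"
    and fHs: "in_Hs mu phi lam sigma f"
    and f_cont_rep: "\<forall>x\<in>space mu. (\<lambda>k. fcoef mu phi f k * phi k x) sums f x"
    and p_in: "p \<in> Pn phi lam n"
    and p_min: "\<forall>q\<in>Pn phi lam n. ls_error X tau L n f p \<le> ls_error X tau L n f q"
  shows "l2norm mu (\<lambda>x. f x - p x)
           \<le> sqrt (1 + (B / A)\<^sup>2) * hs_norm mu phi lam sigma f * phi_sigma mu phi lam sigma n"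
proof -
  interpret P: prob_space mu by (rule prob)
  define c where "c = fcoef mu phi f"
  define I where "I = {k. lam k \<le> real n}"
  have finI: "finite I"
  proof -
    from lam_lim have "eventually (\<lambda>k. lam k \<ge> real n + 1) sequentially"
      by (simp add: filterlim_at_top)
    then obtain N where N: "\<forall>k\<ge>N. lam k \<ge> real n + 1" by (auto simp: eventually_sequentially)
    have "I \<subseteq> {..<N}"
    proof
      fix k assume "k \<in> I"
      hence "lam k \<le> real n" by (simp add: I_def)
      show "k \<in> {..<N}"
      proof (rule ccontr)
        assume "k \<notin> {..<N}"
        hence "lam k \<ge> real n + 1" using N by simp
        thus False using \<open>lam k \<le> real n\<close> by simp
      qed
    qed
    thus ?thesis by (rule finite_subset) auto
  qed
  from p_in obtain cp where p_def: "p = (\<lambda>x. \<Sum>k\<in>I. cp k * phi k x)"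
    unfolding Pn_def I_def by auto
  define s where "s = (\<lambda>x. \<Sum>k\<in>I. c k * phi k x)"
  define w where "w = (\<lambda>x. s x - p x)"
  define g where "g = (\<lambda>x. f x - s x)"
  have w_eq: "w = (\<lambda>x. \<Sum>k\<in>I. (c k - cp k) * phi k x)"
    by (simp add: w_def s_def p_def sum_subtractf algebra_simps)
  have fp: "(\<lambda>x. f x - p x) = (\<lambda>x. g x + w x)" by (auto simp: g_def w_def)
  have phiL2: "\<And>k. in_L2 mu (phi k)"
    and orth: "\<And>j k. l2inner mu (phi j) (phi k) = (if j = k then 1 else 0)"
    using onb unfolding is_ONB_def by auto
  have fL2: "in_L2 mu f" using fHs unfolding in_Hs_def by auto
  have sL2: "in_L2 mu s" unfolding s_def by (intro L2_sum L2_scale phiL2)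
  have pL2: "in_L2 mu p" unfolding p_def by (intro L2_sum L2_scale phiL2)
  have wL2: "in_L2 mu w" unfolding w_def by (intro L2_diff sL2 pL2)
  have gL2: "in_L2 mu g" unfolding g_def by (intro L2_diff sL2 fL2)
  have AB: "A > 0" "B > 0" using MZ unfolding MZ_family_def by auto
  define H where "H = hs_norm mu phi lam sigma f"
  define Phi where "Phi = phi_sigma mu phi lam sigma n"
  define E where "E = H * Phi"
  have H0: "H \<ge> 0" unfolding H_def hs_norm_def
    using fHs unfolding in_Hs_def by (intro real_sqrt_ge_zero suminf_nonneg) auto
  obtain C where C: "\<forall>x\<in>space mu. summable (\<lambda>k. (cmod (phi k x))\<^sup>2 * (1 + (lam k)\<^sup>2) powr (- sigma)) \<and>
                        (\<Sum>k. (cmod (phi k x))\<^sup>2 * (1 + (lam k)\<^sup>2) powr (- sigma)) \<le> C"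
  proof -
    have "Csigma_finite mu phi lam sigma" using crit sigma by blast
    thus ?thesis using that unfolding Csigma_finite_def by (elim exE) 
  qed
  define T where "T x = (\<Sum>k. if lam k > real n then (cmod (phi k x))\<^sup>2 * (1 + (lam k)\<^sup>2) powr (- sigma) else 0)" for x
  have Tsum: "summable (\<lambda>k. if lam k > real n then (cmod (phi k x))\<^sup>2 * (1 + (lam k)\<^sup>2) powr (- sigma) else 0)"
    if "x \<in> space mu" for x
  proof (rule summable_comparison_test'[where N=0])
    show "summable (\<lambda>k. (cmod (phi k x))\<^sup>2 * (1 + (lam k)\<^sup>2) powr (- sigma))"
      using C that by blast
    fix k :: nat
    show "norm (if lam k > real n then (cmod (phi k x))\<^sup>2 * (1 + (lam k)\<^sup>2) powr (- sigma) else 0)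
        \<le> (cmod (phi k x))\<^sup>2 * (1 + (lam k)\<^sup>2) powr (- sigma)"
      by simp
  qed
  have TC: "sqrt (T x) \<le> sqrt C" if "x \<in> space mu" for x
  proof -
    have "T x \<le> (\<Sum>k. (cmod (phi k x))\<^sup>2 * (1 + (lam k)\<^sup>2) powr (- sigma))"
      unfolding T_def
    proof (rule suminf_le)
      show "summable (\<lambda>k. (cmod (phi k x))\<^sup>2 * (1 + (lam k)\<^sup>2) powr (- sigma))"
        using C that by blast
    qed (use Tsum[OF that] in simp_all)
    also have "\<dots> \<le> C" using C that by blast
    finally show ?thesis by simp
  qed
  have bdd: "bdd_above ((\<lambda>x. sqrt (T x)) ` space mu)"
    by (rule bdd_aboveI2[where M="sqrt C"]) (rule TC)
  have TPhi: "sqrt (T x) \<le> Phi" if "x \<in> space mu" for x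
  proof -
    have "Phi = (SUP x\<in>space mu. sqrt (T x))"
      unfolding Phi_def phi_sigma_def T_def by simp
    thus ?thesis using cSUP_upper[OF that bdd] by simp
  qed
  have gbound: "cmod (g x) \<le> E" if x: "x \<in> space mu" for x
  proof -
    have "(\<lambda>k. c k * phi k x) sums f x" using f_cont_rep x unfolding c_def by auto
    moreover have "(\<lambda>k. if k \<in> I then c k * phi k x else 0) sums s x"
      unfolding s_def by (rule sums_If_finite_set[OF finI])
    ultimately have "(\<lambda>k. c k * phi k x - (if k \<in> I then c k * phi k x else 0)) sums g x"
      unfolding g_def by (rule sums_diff)
    moreover have "(\<lambda>k. c k * phi k x - (if k \<in> I then c k * phi k x else 0)) =
        (\<lambda>k. if lam k > real n then c k * phi k x else 0)"
      by (auto simp: I_def)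
    ultimately have G: "(\<lambda>k. if lam k > real n then c k * phi k x else 0) sums g x" by simp
    have "cmod (g x) \<le> sqrt (\<Sum>k. (cmod (c k))\<^sup>2 * (1 + (lam k)\<^sup>2) powr sigma) * sqrt (T x)"
      unfolding T_def
    proof (rule pointwise_bound[OF _ _ _ G])
      show "summable (\<lambda>k. (cmod (c k))\<^sup>2 * (1 + (lam k)\<^sup>2) powr sigma)"
        using fHs unfolding in_Hs_def c_def by auto
      show "summable (\<lambda>k. if lam k > real n then (cmod (phi k x))\<^sup>2 * (1 + (lam k)\<^sup>2) powr (- sigma) else 0)"
        by (rule Tsum[OF x])
    qed (simp add: add_pos_nonneg)
    also have "\<dots> = H * sqrt (T x)" unfolding H_def hs_norm_def c_def by simp
    also have "\<dots> \<le> H * Phi" using TPhi[OF x] H0 by (rule mult_left_mono)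
    finally show ?thesis unfolding E_def .
  qed
  have E0: "E \<ge> 0"
  proof -
    obtain x where "x \<in> space mu" using P.not_empty by blast
    thus ?thesis using gbound[of x] by (meson norm_ge_zero order_trans)
  qed
  define N2 where "N2 h = (LINT x|mu. (cmod (h x))\<^sup>2)" for h :: "'a \<Rightarrow> complex"
  have N2_nonneg: "N2 h \<ge> 0" for h unfolding N2_def by simp
  have gN: "N2 g \<le> E\<^sup>2"
  proof -
    have "N2 g \<le> (LINT x|mu. E\<^sup>2)" unfolding N2_def
      using gL2 gbound E0 unfolding in_L2_def
      by (intro integral_mono) (auto intro: power_mono)
    also have "\<dots> = E\<^sup>2" using P.prob_space by simp
    finally show ?thesis .
  qed
  have orthg: "(LINT x|mu. g x * cnj (phi k x)) = 0" if k: "k \<in> I" for k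
  proof -
    have eq: "(\<lambda>x. g x * cnj (phi k x)) = (\<lambda>x. f x * cnj (phi k x) - (\<Sum>j\<in>I. c j * (phi j x * cnj (phi k x))))"
      by (simp add: g_def s_def left_diff_distrib sum_distrib_right mult.assoc)
    have "(LINT x|mu. g x * cnj (phi k x)) = (LINT x|mu. f x * cnj (phi k x)) - (\<Sum>j\<in>I. c j * (LINT x|mu. phi j x * cnj (phi k x)))"
      unfolding eq
      using L2_prod_integrable[OF fL2 phiL2] L2_prod_integrable[OF phiL2 phiL2]
      by (subst Bochner_Integration.integral_diff) (auto simp: Bochner_Integration.integral_sum)
    also have "\<dots> = c k - (\<Sum>j\<in>I. c j * (if j = k then 1 else 0))"
      using orth unfolding l2inner_def c_def fcoef_def by simp
    also have "\<dots> = 0" using finI k by (simp add: if_distrib sum.delta cong: if_cong)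
    finally show ?thesis .
  qed
  have orthgw: "(LINT x|mu. g x * cnj (w x)) = 0"
  proof -
    have eq: "(\<lambda>x. g x * cnj (w x)) = (\<lambda>x. \<Sum>k\<in>I. cnj (c k - cp k) * (g x * cnj (phi k x)))"
      by (auto simp: w_eq sum_distrib_left algebra_simps)
    show ?thesis unfolding eq
      using L2_prod_integrable[OF gL2 phiL2] orthg by (simp add: Bochner_Integration.integral_sum)
  qed
  have pyth: "N2 (\<lambda>x. f x - p x) = N2 g + N2 w"
  proof -
    have i1: "integrable mu (\<lambda>x. (cmod (g x))\<^sup>2)" "integrable mu (\<lambda>x. (cmod (w x))\<^sup>2)"
      using gL2 wL2 unfolding in_L2_def by auto
    have i2: "integrable mu (\<lambda>x. 2 * Re (g x * cnj (w x)))"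
      using integrable_Re[OF L2_prod_integrable[OF gL2 wL2]] by (intro integrable_mult_right) (simp only:)
    have "N2 (\<lambda>x. f x - p x) = (LINT x|mu. ((cmod (g x))\<^sup>2 + 2 * Re (g x * cnj (w x))) + (cmod (w x))\<^sup>2)"
      unfolding N2_def fp cmod_add_sq by simp
    also have "\<dots> = (LINT x|mu. (cmod (g x))\<^sup>2) + (LINT x|mu. 2 * Re (g x * cnj (w x))) + (LINT x|mu. (cmod (w x))\<^sup>2)"
      using i1 i2 by (simp add: Bochner_Integration.integral_add Bochner_Integration.integrable_add)
    also have "(LINT x|mu. 2 * Re (g x * cnj (w x))) = 0"
    proof -
      have "(LINT x|mu. 2 * Re (g x * cnj (w x))) = 2 * (LINT x|mu. Re (g x * cnj (w x)))"
        by (rule integral_mult_right_zero)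
      also have "\<dots> = 2 * Re (LINT x|mu. g x * cnj (w x))"
        using integral_Re[OF L2_prod_integrable[OF gL2 wL2]] by (simp only:)
      finally show ?thesis using orthgw by simp
    qed
    finally show ?thesis unfolding N2_def by simp
  qed
  have main: "N2 (\<lambda>x. f x - p x) \<le> (1 + (B / A)\<^sup>2) * E\<^sup>2"
  proof (cases "0 \<in> I")
    case False
    have "I = {}"
    proof (rule ccontr)
      assume "I \<noteq> {}"
      then obtain k where "k \<in> I" by blast
      hence "lam 0 \<le> real n" using lam_mono unfolding I_def mono_def by (meson le0 mem_Collect_eq order_trans)
      thus False using False unfolding I_def by simp
    qed
    hence "N2 w = 0" unfolding N2_def w_eq by simp
    hence "N2 (\<lambda>x. f x - p x) \<le> E\<^sup>2" using pyth gN by simp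
    also have "\<dots> \<le> (1 + (B / A)\<^sup>2) * E\<^sup>2" by (simp add: mult_le_cancel_right1)
    finally show ?thesis .
  next
    case True
    define a where "a k = (if k = 0 then 1 else 0 :: complex)" for k :: nat
    have phi0P: "phi 0 \<in> Pn phi lam n"
    proof -
      have "phi 0 = (\<lambda>x. \<Sum>k\<in>I. a k * phi k x)"
      proof
        fix x
        have "(\<Sum>k\<in>I. a k * phi k x) = (\<Sum>k\<in>I. if k = 0 then phi 0 x else 0)"
          by (intro sum.cong) (auto simp: a_def)
        also have "\<dots> = phi 0 x" using True finI by (simp add: sum.delta')
        finally show "phi 0 x = (\<Sum>k\<in>I. a k * phi k x)" by simp
      qed
      thus ?thesis unfolding Pn_def I_def by blast
    qed
    have nphi0: "l2norm mu (phi 0) = 1"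
    proof -
      have "(LINT x|mu. (cmod (phi 0 x))\<^sup>2) = (LINT x|mu. 1)"
        by (rule Bochner_Integration.integral_cong) (auto simp: phi0)
      thus ?thesis unfolding l2norm_def using P.prob_space by simp
    qed
    define K where "K = {1..L n}"
    have XK: "\<And>k. k \<in> K \<Longrightarrow> X n k \<in> space mu \<and> tau n k > 0"
      using MZ unfolding MZ_family_def K_def by auto
    have MZn: "\<And>q. q \<in> Pn phi lam n \<Longrightarrow> A * (l2norm mu q)\<^sup>2 \<le> (\<Sum>k\<in>K. (cmod (q (X n k)))\<^sup>2 * tau n k) \<and>
         (\<Sum>k\<in>K. (cmod (q (X n k)))\<^sup>2 * tau n k) \<le> B * (l2norm mu q)\<^sup>2"
      using MZ unfolding MZ_family_def K_def by auto
    have sumtau: "(\<Sum>k\<in>K. (cmod (phi 0 (X n k)))\<^sup>2 * tau n k) = (\<Sum>k\<in>K. tau n k)"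
      using XK phi0 by (intro sum.cong) auto
    have AT: "A \<le> (\<Sum>k\<in>K. tau n k)" and TB: "(\<Sum>k\<in>K. tau n k) \<le> B"
      using MZn[OF phi0P] nphi0 sumtau by auto
    have AleB: "A \<le> B" using AT TB by simp
    have wP: "w \<in> Pn phi lam n" unfolding w_eq Pn_def I_def
      by (rule CollectI, rule exI[where x="\<lambda>k. c k - cp k"]) simp
    have ptw: "(\<lambda>x. p x + complex_of_real t * w x) \<in> Pn phi lam n" for t
    proof -
      have "(\<lambda>x. p x + complex_of_real t * w x) = (\<lambda>x. \<Sum>k\<in>I. (cp k + complex_of_real t * (c k - cp k)) * phi k x)"
        by (simp add: p_def w_eq sum_distrib_left sum.distrib[symmetric] distrib_right mult.assoc)
      thus ?thesis unfolding Pn_def I_def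
        by (intro CollectI exI[where x="\<lambda>k. cp k + complex_of_real t * (c k - cp k)"]) simp
    qed
    have disc: "(\<Sum>k\<in>K. (cmod (w (X n k)))\<^sup>2 * tau n k) \<le> (\<Sum>k\<in>K. (cmod ((f (X n k) - p (X n k)) - w (X n k)))\<^sup>2 * tau n k)"
    proof (rule discrete_ls)
      show "\<And>k. k \<in> K \<Longrightarrow> tau n k > 0" using XK by blast
      fix t :: real
      have "ls_error X tau L n f p \<le> ls_error X tau L n f (\<lambda>x. p x + complex_of_real t * w x)"
        using p_min ptw by blast
      thus "(\<Sum>k\<in>K. (cmod (f (X n k) - p (X n k)))\<^sup>2 * tau n k) \<le> (\<Sum>k\<in>K. (cmod (f (X n k) - p (X n k) - complex_of_real t * w (X n k)))\<^sup>2 * tau n k)"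
        unfolding ls_error_def K_def by (simp add: diff_diff_eq)
    qed
    have gX: "(cmod ((f (X n k) - p (X n k)) - w (X n k)))\<^sup>2 \<le> E\<^sup>2" if "k \<in> K" for k
    proof -
      have "(f (X n k) - p (X n k)) - w (X n k) = g (X n k)" by (simp add: g_def w_def)
      thus ?thesis using gbound[of "X n k"] XK[OF that] by (simp add: power_mono)
    qed
    have "A * N2 w \<le> (\<Sum>k\<in>K. (cmod (w (X n k)))\<^sup>2 * tau n k)"
    proof -
      have "(l2norm mu w)\<^sup>2 = N2 w" unfolding l2norm_def
        using N2_nonneg[of w] unfolding N2_def by simp
      thus ?thesis using MZn[OF wP] by simp
    qed
    also have "\<dots> \<le> (\<Sum>k\<in>K. E\<^sup>2 * tau n k)"
      using gX XK by (intro order_trans[OF disc] sum_mono mult_right_mono) (auto intro: less_imp_le)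
    also have "\<dots> = E\<^sup>2 * (\<Sum>k\<in>K. tau n k)" by (simp add: sum_distrib_left)
    also have "\<dots> \<le> E\<^sup>2 * B" using TB by (intro mult_left_mono) auto
    finally have "A * N2 w \<le> E\<^sup>2 * B" .
    hence Nw: "N2 w \<le> (B / A) * E\<^sup>2" using AB by (simp add: field_simps)
    have k1: "B / A \<le> (B / A)\<^sup>2"
    proof -
      have "1 \<le> B / A" using AleB AB by simp
      hence "1 * (B / A) \<le> (B / A) * (B / A)" by (intro mult_right_mono) auto
      thus ?thesis by (simp add: power2_eq_square)
    qed
    have "N2 (\<lambda>x. f x - p x) \<le> E\<^sup>2 + (B / A) * E\<^sup>2" using pyth gN Nw by simp
    also have "\<dots> \<le> E\<^sup>2 + (B / A)\<^sup>2 * E\<^sup>2" using k1 by (intro add_left_mono mult_right_mono) auto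
    also have "\<dots> = (1 + (B / A)\<^sup>2) * E\<^sup>2" by (simp add: algebra_simps)
    finally show ?thesis .
  qed
  have "l2norm mu (\<lambda>x. f x - p x) = sqrt (N2 (\<lambda>x. f x - p x))" unfolding l2norm_def N2_def by simp
  also have "\<dots> \<le> sqrt ((1 + (B / A)\<^sup>2) * E\<^sup>2)" using main by simp
  also have "\<dots> = sqrt (1 + (B / A)\<^sup>2) * E" using E0 by (simp add: real_sqrt_mult)
  finally show ?thesis unfolding E_def H_def Phi_def by (simp add: mult.assoc)
qed

end
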